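(* Let $T,S$ be bounded linear operators on a Banach space with $ST=\nu\,\mathrm{id}$ for some $\nu\in\mathbb C\setminus\{0\}$. Then for all $h\in\mathbb N$, \[(T+S)^h=\sum_{k=0}^{\lfloor h/2\rfloor}\alpha_{h,k}\,\nu^k\sum_{l=0}^{h-2k}T^lS^{\,h-2k-l},\qquad\alpha_{h,k}:=\binom hk-\binom h{k-1},\] with the convention $\binom h{-1}=0$ and $\alpha_{0,0}=1$.
   Context: $\mathbb N=\{0,1,2,\dots\}$; $T^0=S^0=\mathrm{id}$. *)

theory Defs
  imports "HOL-Analysis.Analysis"
begin

class scaleC =
  fixes scaleC :: "complex \<Rightarrow> 'a \<Rightarrow> 'a" (infixr \<open>*\<^sub>C\<close> 75)

class complex_banach = scaleC + banach +
  assumes scaleC_add_right: "a *\<^sub>C (x + y) = a *\<^sub>C x + a *\<^sub>C y"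
    and scaleC_add_left: "(a + b) *\<^sub>C x = a *\<^sub>C x + b *\<^sub>C x"
    and scaleC_scaleC: "a *\<^sub>C b *\<^sub>C x = (a * b) *\<^sub>C x"
    and scaleC_one: "1 *\<^sub>C x = x"
    and scaleR_scaleC: "r *\<^sub>R x = complex_of_real r *\<^sub>C x"
    and norm_scaleC: "norm (a *\<^sub>C x) = cmod a * norm x"

definition bounded_clinear :: "('a::complex_banach \<Rightarrow> 'b::complex_banach) \<Rightarrow> bool" where
  "bounded_clinear f \<longleftrightarrow>
     (\<forall>x y. f (x + y) = f x + f y) \<and> (\<forall>c x. f (c *\<^sub>C x) = c *\<^sub>C f x) \<and>
     (\<exists>K. \<forall>x. norm (f x) \<le> norm x * K)"

definition alpha_coef :: "nat \<Rightarrow> nat \<Rightarrow> int" where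
  "alpha_coef h k = int (h choose k) - (if k = 0 then 0 else int (h choose (k - 1)))"

end

theory Submission
  imports Defs
begin

interpretation C: module "scaleC :: complex \<Rightarrow> 'a::complex_banach \<Rightarrow> 'a"
  by unfold_locales (simp_all add: scaleC_add_right scaleC_add_left scaleC_scaleC scaleC_one)

lemma alpha_Suc0: "alpha_coef (Suc h) 0 = alpha_coef h 0"
  by (simp add: alpha_coef_def)

lemma alpha_SucSuc: "alpha_coef (Suc h) (Suc k) = alpha_coef h (Suc k) + alpha_coef h k"
  by (cases k) (simp_all add: alpha_coef_def)

lemma alpha_mid: "alpha_coef (Suc (2*n)) (Suc n) = 0"
proof -
  have "Suc (2*n) choose Suc n = Suc (2*n) choose n"
    using binomial_symmetric[of n "Suc (2*n)"] by simp
  then show ?thesis by (simp add: alpha_coef_def)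
qed

locale ops =
  fixes T S :: "'a::complex_banach \<Rightarrow> 'a" and \<nu> :: complex
  assumes Tadd: "\<And>x y. T (x + y) = T x + T y" and Tsc: "\<And>c x. T (c *\<^sub>C x) = c *\<^sub>C T x"
    and Sadd: "\<And>x y. S (x + y) = S x + S y" and Ssc: "\<And>c x. S (c *\<^sub>C x) = c *\<^sub>C S x"
    and ST: "\<And>x. S (T x) = \<nu> *\<^sub>C x"
begin

interpretation TA: additive T by unfold_locales (rule Tadd)
interpretation SA: additive S by unfold_locales (rule Sadd)

definition P :: "nat \<Rightarrow> 'a \<Rightarrow> 'a" where
  "P m x = (\<Sum>l\<in>{0..m}. (T ^^ l) ((S ^^ (m - l)) x))"

lemma TP: "T (P m x) + (S ^^ Suc m) x = P (Suc m) x"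
  unfolding P_def sum.atLeast0_atMost_Suc_shift
  by (simp add: TA.sum funpow_swap1)

lemma SP: "S (P (Suc m) x) = (S ^^ Suc (Suc m)) x + \<nu> *\<^sub>C P m x"
proof -
  have "P (Suc m) x = (S ^^ Suc m) x + (\<Sum>l\<in>{0..m}. T ((T ^^ l) ((S ^^ (m - l)) x)))"
    unfolding P_def sum.atLeast0_atMost_Suc_shift by (simp add: funpow_swap1)
  then have "S (P (Suc m) x) = (S ^^ Suc (Suc m)) x + (\<Sum>l\<in>{0..m}. \<nu> *\<^sub>C (T ^^ l) ((S ^^ (m - l)) x))"
    by (simp add: Sadd SA.sum ST)
  then show ?thesis by (simp add: P_def C.scale_sum_right)
qed

lemma SP0: "S (P 0 x) = (S ^^ Suc 0) x"
  by (simp add: P_def)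

lemma step: "T (P m x) + S (P m x) = P (Suc m) x + (if m = 0 then 0 else \<nu> *\<^sub>C P (m - 1) x)"
proof (cases m)
  case 0 then show ?thesis using TP[of 0 x] SP0[of x] by simp
next
  case (Suc k) then show ?thesis using TP[of m x] SP[of k x] by (simp add: algebra_simps)
qed

definition c :: "nat \<Rightarrow> nat \<Rightarrow> complex" where
  "c h k = of_int (alpha_coef h k) * \<nu> ^ k"

lemma c_Suc: "c (Suc h) k = c h k + (if k = 0 then 0 else \<nu> * c h (k - 1))"
  by (cases k) (simp_all add: c_def alpha_Suc0 alpha_SucSuc algebra_simps)

definition Q :: "nat \<Rightarrow> 'a \<Rightarrow> 'a" where
  "Q h x = (\<Sum>k\<in>{0..h div 2}. c h k *\<^sub>C P (h - 2 * k) x)"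

lemma Q_step: "Q (Suc h) x = T (Q h x) + S (Q h x)"
proof -
  have TS: "T (Q h x) + S (Q h x) = (\<Sum>k\<in>{0..h div 2}. c h k *\<^sub>C P (Suc (h - 2 * k)) x)
     + (\<Sum>k\<in>{0..h div 2}. c h k *\<^sub>C (if h - 2 * k = 0 then 0 else \<nu> *\<^sub>C P (h - 2 * k - 1) x))"
  proof -
    have "T (Q h x) + S (Q h x) = (\<Sum>k\<in>{0..h div 2}. c h k *\<^sub>C (T (P (h - 2 * k) x) + S (P (h - 2 * k) x)))"
      unfolding Q_def TA.sum SA.sum Tsc Ssc C.scale_right_distrib sum.distrib ..
    also have "\<dots> = (\<Sum>k\<in>{0..h div 2}. c h k *\<^sub>C P (Suc (h - 2 * k)) x
        + c h k *\<^sub>C (if h - 2 * k = 0 then 0 else \<nu> *\<^sub>C P (h - 2 * k - 1) x))"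
      unfolding step C.scale_right_distrib ..
    finally show ?thesis unfolding sum.distrib .
  qed
  have QS: "Q (Suc h) x = (\<Sum>k\<in>{0..Suc h div 2}. c h k *\<^sub>C P (Suc h - 2 * k) x)
     + (\<Sum>k\<in>{0..Suc h div 2}. (if k = 0 then 0 else (\<nu> * c h (k - 1)) *\<^sub>C P (Suc h - 2 * k) x))"
    unfolding Q_def c_Suc C.scale_left_distrib sum.distrib[symmetric]
    by (rule sum.cong) auto
  obtain n where "h = 2 * n \<or> h = Suc (2 * n)"
  proof -
    have "h = 2 * (h div 2) \<or> h = Suc (2 * (h div 2))" by presburger
    then show ?thesis using that by blast
  qed
  then show ?thesis
  proof
    assume h: "h = 2 * n"
    have A: "(\<Sum>k\<in>{0..Suc h div 2}. c h k *\<^sub>C P (Suc h - 2 * k) x)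
       = (\<Sum>k\<in>{0..h div 2}. c h k *\<^sub>C P (Suc (h - 2 * k)) x)"
      using h by (intro sum.cong) (auto simp: Suc_diff_le)
    have B: "(\<Sum>k\<in>{0..Suc h div 2}. (if k = 0 then 0 else (\<nu> * c h (k - 1)) *\<^sub>C P (Suc h - 2 * k) x))
       = (\<Sum>k\<in>{0..h div 2}. c h k *\<^sub>C (if h - 2 * k = 0 then 0 else \<nu> *\<^sub>C P (h - 2 * k - 1) x))"
    proof (cases n)
      case 0 then show ?thesis using h by simp
    next
      case (Suc m)
      have "(\<Sum>k\<in>{0..Suc h div 2}. (if k = 0 then 0 else (\<nu> * c h (k - 1)) *\<^sub>C P (Suc h - 2 * k) x))
          = (\<Sum>k\<in>{0..m}. (\<nu> * c h k) *\<^sub>C P (h - 2 * k - 1) x)"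
      proof -
        have e: "Suc h div 2 = Suc m" using h Suc by simp
        show ?thesis unfolding e sum.atLeast0_atMost_Suc_shift
          using h Suc by (simp del: sum.op_ivl_Suc)
      qed
      also have "\<dots> = (\<Sum>k\<in>{0..h div 2}. c h k *\<^sub>C (if h - 2 * k = 0 then 0 else \<nu> *\<^sub>C P (h - 2 * k - 1) x))"
        using h Suc by (simp add: sum.atLeast0_atMost_Suc mult.commute)
      finally show ?thesis .
    qed
    show ?thesis using TS QS A B by simp
  next
    assume h: "h = Suc (2 * n)"
    have A: "(\<Sum>k\<in>{0..Suc h div 2}. c h k *\<^sub>C P (Suc h - 2 * k) x)
       = (\<Sum>k\<in>{0..h div 2}. c h k *\<^sub>C P (Suc (h - 2 * k)) x)"
    proof -
      have "(\<Sum>k\<in>{0..Suc h div 2}. c h k *\<^sub>C P (Suc h - 2 * k) x)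
         = (\<Sum>k\<in>{0..n}. c h k *\<^sub>C P (Suc h - 2 * k) x)"
        using h by (simp add: sum.atLeast0_atMost_Suc c_def alpha_mid)
      also have "\<dots> = (\<Sum>k\<in>{0..h div 2}. c h k *\<^sub>C P (Suc (h - 2 * k)) x)"
        using h by (intro sum.cong) (auto simp: Suc_diff_le)
      finally show ?thesis .
    qed
    have B: "(\<Sum>k\<in>{0..Suc h div 2}. (if k = 0 then 0 else (\<nu> * c h (k - 1)) *\<^sub>C P (Suc h - 2 * k) x))
       = (\<Sum>k\<in>{0..h div 2}. c h k *\<^sub>C (if h - 2 * k = 0 then 0 else \<nu> *\<^sub>C P (h - 2 * k - 1) x))"
    proof -
      have "(\<Sum>k\<in>{0..Suc h div 2}. (if k = 0 then 0 else (\<nu> * c h (k - 1)) *\<^sub>C P (Suc h - 2 * k) x))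
          = (\<Sum>k\<in>{0..n}. (\<nu> * c h k) *\<^sub>C P (h - 1 - 2 * k) x)"
      proof -
        have e: "Suc h div 2 = Suc n" using h by simp
        show ?thesis unfolding e sum.atLeast0_atMost_Suc_shift
          using h by (simp del: sum.op_ivl_Suc)
      qed
      also have "\<dots> = (\<Sum>k\<in>{0..h div 2}. c h k *\<^sub>C (if h - 2 * k = 0 then 0 else \<nu> *\<^sub>C P (h - 2 * k - 1) x))"
        using h by (intro sum.cong) (auto simp: mult.commute)
      finally show ?thesis .
    qed
    show ?thesis using TS QS A B by simp
  qed
qed

lemma main: "((\<lambda>x. T x + S x) ^^ h) x = Q h x"
proof (induction h arbitrary: x)
  case 0 then show ?case by (simp add: Q_def c_def alpha_coef_def P_def)
next
  case (Suc h) then show ?case by (simp add: Q_step)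
qed

end

theorem lemma3p1:
  fixes T S :: "'a::complex_banach \<Rightarrow> 'a" and \<nu> :: complex and h :: nat
  assumes "bounded_clinear T" and "bounded_clinear S"
    and "\<And>x. S (T x) = \<nu> *\<^sub>C x" and "\<nu> \<noteq> 0"
  shows "((\<lambda>x. T x + S x) ^^ h) =
    (\<lambda>x. \<Sum>k\<in>{0..h div 2}. (of_int (alpha_coef h k) * \<nu> ^ k) *\<^sub>C
           (\<Sum>l\<in>{0..h - 2 * k}. (T ^^ l) ((S ^^ (h - 2 * k - l)) x)))"
proof -
  interpret ops T S \<nu>
    using assms unfolding bounded_clinear_def by unfold_locales auto
  show ?thesis
    by (rule ext) (simp add: main Q_def c_def P_def)
qed

end
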